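(* Consider the following setting. Let $d,p\ge 1$. A confounder $\mathbf Z\in\mathbb R^d$, a treatment $\mathbf X\in\mathbb R^p$ and an outcome $Y\in\mathbb R$ are generated by the linear Gaussian structural equation model $\mathbf Z\leftarrow \mathbf N_{\mathbf Z}$, $\mathbf X\leftarrow \mathbf B\mathbf Z+\mathbf N_{\mathbf X}$, $Y\leftarrow \mathbf Z^\top\boldsymbol\gamma+\mathbf X^\top\boldsymbol\alpha+N_Y$, where $\mathbf B\in\mathbb R^{p\times d}$, $\boldsymbol\gamma\in\mathbb R^d$, $\boldsymbol\alpha\in\mathbb R^p$, and $\mathbf N_{\mathbf Z}\sim\mathcal N(\mathbf 0,\Sigma_{\mathbf N_{\mathbf Z}})$, $\mathbf N_{\mathbf X}\sim\mathcal N(\mathbf 0,\Sigma_{\mathbf N_{\mathbf X}})$, $N_Y\sim\mathcal N(0,\sigma^2_{N_Y})$ are mutually independent. Let $P_{\mathrm{obs}}$ be the induced distribution of $(\mathbf X,Y)$. Let $P_{\mathrm{int}}$ be the distribution of $(\mathbf X,Y)$ in the modified model where the assignment of $\mathbf X$ is replaced by $\mathbf X\leftarrow\widetilde{\mathbf N}_{\mathbf X}$, with $\widetilde{\mathbf N}_{\mathbf X}$ (possibly non-Gaussian) independent of $\mathbf N_{\mathbf Z}$ and $N_Y$. Let $n=n(m)$, and let $(\mathbf X_O,\mathbf Y_O)\in\mathbb R^{n\times p}\times\mathbb R^n$ consist of $n$ i.i.d. samples from $P_{\mathrm{obs}}$ and $(\mathbf X_I,\mathbf Y_I)\in\mathbb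 R^{m\times p}\times\mathbb R^m$ of $m$ i.i.d. samples from $P_{\mathrm{int}}$, the two samples independent. Let $\widehat{\boldsymbol\alpha}_O=(\mathbf X_O^\top\mathbf X_O)^{-1}\mathbf X_O^\top\mathbf Y_O$, $\widehat{\boldsymbol\alpha}_I=(\mathbf X_I^\top\mathbf X_I)^{-1}\mathbf X_I^\top\mathbf Y_I$, $\widehat\sigma^2_{\mathrm{int}}=\frac1{m-1}\|\mathbf Y_I-\mathbf X_I\widehat{\boldsymbol\alpha}_I\|_2^2$, $\widehat\sigma^2_{\mathrm{obs}}=\frac1{n-1}\|\mathbf Y_O-\mathbf X_O\widehat{\boldsymbol\alpha}_O\|_2^2$, $\widehat{\mathbf C}_I=(\mathbf X_I^\top\mathbf X_I)^{-1}\widehat\sigma^2_{\mathrm{int}}$, $\widehat{\mathbf C}_O=(\mathbf X_O^\top\mathbf X_O)^{-1}\widehat\sigma^2_{\mathrm{obs}}$, $\widehat{\boldsymbol\Delta}_m=\widehat{\boldsymbol\alpha}_O-\widehat{\boldsymbol\alpha}_I$, and for a fixed $\epsilon>0$ $\widehat{\mathbf W}^m_*=\big(\widehat{\mathbf C}_O+\widehat{\boldsymbol\Delta}_m\widehat{\boldsymbol\Delta}_m^\top+\epsilon\mathbf I_p\big)\big(\widehat{\mathbf C}_I+\widehat{\mathbf C}_O+\widehat{\boldsymbol\Delta}_m\widehat{\boldsymbol\Delta}_m^\top+\epsilon\mathbf I_p\big)^{-1}$. Suppose $\lim_{m\to\infty} n(m)/m=c$ for some constant $c>0$. Then $\widehat{\mathbf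 W}^m_*$ converges almost surely to $\mathbf I_p$ as $m\to\infty$.
   Context: The matrices $\mathbf X_O^\top\mathbf X_O$ and $\mathbf X_I^\top\mathbf X_I$ are assumed non-singular. A sequence of random matrices $\widehat{\mathbf M}_m$ converges almost surely to a random matrix $\mathbf M$ if $P\big(\lim_{m\to\infty}\widehat{\mathbf M}_m=\mathbf M\big)=1$. *)

theory Defs
  imports "HOL-Probability.Probability"
begin

definition outer :: "real^'p \<Rightarrow> real^'p \<Rightarrow> real^'p^'p" where
  "outer u v = (\<chi> i j. u $ i * v $ j)"

text \<open>Centered Gaussian random vector with covariance matrix S, defined via its
  characteristic function (this also covers degenerate covariance).\<close>
definition centered_gaussian_vec ::
  "'a measure \<Rightarrow> ('a \<Rightarrow> real^'k) \<Rightarrow> real^'k^'k \<Rightarrow> bool" where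
  "centered_gaussian_vec M V S \<longleftrightarrow>
     V \<in> borel_measurable M \<and> transpose S = S \<and> (\<forall>u. 0 \<le> u \<bullet> (S *v u)) \<and>
     (\<forall>u. (\<integral>\<omega>. cis (u \<bullet> V \<omega>) \<partial>M) = complex_of_real (exp (- (u \<bullet> (S *v u)) / 2)))"

definition centered_gaussian_real ::
  "'a measure \<Rightarrow> ('a \<Rightarrow> real) \<Rightarrow> real \<Rightarrow> bool" where
  "centered_gaussian_real M V s2 \<longleftrightarrow>
     V \<in> borel_measurable M \<and> 0 \<le> s2 \<and>
     (\<forall>t. (\<integral>\<omega>. cis (t * V \<omega>) \<partial>M) = complex_of_real (exp (- (t\<^sup>2 * s2) / 2)))"

text \<open>For a sample (x_i, y_i), i < k (the rows of the design matrix X and the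
  vector Y): X^T X, the OLS estimate, the residual variance estimate and C-hat.\<close>
definition gram :: "(nat \<Rightarrow> real^'p) \<Rightarrow> nat \<Rightarrow> real^'p^'p" where
  "gram x k = (\<Sum>i<k. outer (x i) (x i))"

definition ols :: "(nat \<Rightarrow> real^'p) \<Rightarrow> (nat \<Rightarrow> real) \<Rightarrow> nat \<Rightarrow> real^'p" where
  "ols x y k = matrix_inv (gram x k) *v (\<Sum>i<k. y i *\<^sub>R x i)"

definition sigma2_hat :: "(nat \<Rightarrow> real^'p) \<Rightarrow> (nat \<Rightarrow> real) \<Rightarrow> nat \<Rightarrow> real" where
  "sigma2_hat x y k = (\<Sum>i<k. (y i - x i \<bullet> ols x y k)\<^sup>2) / (real k - 1)"

definition C_hat :: "(nat \<Rightarrow> real^'p) \<Rightarrow> (nat \<Rightarrow> real) \<Rightarrow> nat \<Rightarrow> real^'p^'p" where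
  "C_hat x y k = sigma2_hat x y k *\<^sub>R matrix_inv (gram x k)"

definition W_hat :: "real \<Rightarrow> (nat \<Rightarrow> real^'p) \<Rightarrow> (nat \<Rightarrow> real) \<Rightarrow> (nat \<Rightarrow> real^'p) \<Rightarrow>
    (nat \<Rightarrow> real) \<Rightarrow> nat \<Rightarrow> nat \<Rightarrow> real^'p^'p" where
  "W_hat \<epsilon> xO yO xI yI nn m =
     (let \<Delta> = ols xO yO nn - ols xI yI m;
          A = C_hat xO yO nn + outer \<Delta> \<Delta> + \<epsilon> *\<^sub>R mat 1
      in A ** matrix_inv (C_hat xI yI m + A))"

end

theory Submission
  imports Defs
begin

lemma outer_mulv: "outer u v *v w = (v \<bullet> w) *\<^sub>R u"
  by (simp add: outer_def matrix_vector_mult_def vec_eq_iff inner_vec_def sum_distrib_left mult.assoc mult.commute mult.left_commute)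

lemma gram_mulv: "gram x k *v w = (\<Sum>i<k. (x i \<bullet> w) *\<^sub>R x i)"
proof (induction k)
  case 0 then show ?case by (simp add: gram_def)
next
  case (Suc k)
  have "gram x (Suc k) = gram x k + outer (x k) (x k)" by (simp add: gram_def)
  then show ?case using Suc by (simp add: matrix_vector_mult_add_rdistrib outer_mulv)
qed

lemma gram_quad: "w \<bullet> (gram x k *v w) = (\<Sum>i<k. (x i \<bullet> w)\<^sup>2)"
  by (simp add: gram_mulv inner_sum_right power2_eq_square inner_commute)

lemma invertible_inv:
  fixes G :: "real^'n^'n"
  assumes "invertible G"
  shows "G ** matrix_inv G = mat 1" "matrix_inv G ** G = mat 1"
  using someI_ex[OF assms[unfolded invertible_def]] unfolding matrix_inv_def by auto

lemma ols_normal: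
  assumes "invertible (gram x k)"
  shows "gram x k *v ols x y k = (\<Sum>i<k. y i *\<^sub>R x i)"
  using invertible_inv[OF assms] by (simp add: ols_def matrix_vector_mul_assoc)

lemma ols_min:
  assumes "invertible (gram x k)"
  shows "(\<Sum>i<k. (y i - x i \<bullet> ols x y k)\<^sup>2) \<le> (\<Sum>i<k. (y i - x i \<bullet> \<beta>)\<^sup>2)"
proof -
  define a where "a = ols x y k"
  define d where "d = a - \<beta>"
  define r where "r i = y i - x i \<bullet> a" for i
  have eq: "y i - x i \<bullet> \<beta> = r i + x i \<bullet> d" for i
    by (simp add: r_def d_def inner_diff_right)
  have "(\<Sum>i<k. r i * (x i \<bullet> d)) = d \<bullet> (\<Sum>i<k. y i *\<^sub>R x i) - d \<bullet> (\<Sum>i<k. (x i \<bullet> a) *\<^sub>R x i)"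
    by (simp add: r_def inner_sum_right sum_subtractf[symmetric] algebra_simps inner_commute)
  also have "\<dots> = 0"
    using ols_normal[OF assms, of y] by (simp add: gram_mulv a_def)
  finally have cross: "(\<Sum>i<k. r i * (x i \<bullet> d)) = 0" .
  have "(\<Sum>i<k. (y i - x i \<bullet> \<beta>)\<^sup>2) = (\<Sum>i<k. (r i)\<^sup>2) + 2 * (\<Sum>i<k. r i * (x i \<bullet> d)) + (\<Sum>i<k. (x i \<bullet> d)\<^sup>2)"
    by (simp add: eq power2_sum sum.distrib sum_distrib_left mult.assoc)
  also have "\<dots> \<ge> (\<Sum>i<k. (r i)\<^sup>2)"
    using cross by (simp add: sum_nonneg)
  finally show ?thesis by (simp add: r_def a_def)
qed

lemma inv_bound:
  fixes G :: "real^'n^'n"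
  assumes inv: "invertible G" and L: "L > 0" and q: "\<And>u. L * (norm u)\<^sup>2 \<le> u \<bullet> (G *v u)"
  shows "norm (matrix_inv G *v v) \<le> norm v / L"
proof -
  define w where "w = matrix_inv G *v v"
  have Gw: "G *v w = v" using invertible_inv[OF inv] by (simp add: w_def matrix_vector_mul_assoc)
  have "L * (norm w)\<^sup>2 \<le> w \<bullet> v" using q[of w] Gw by simp
  also have "\<dots> \<le> norm w * norm v" by (rule norm_cauchy_schwarz)
  finally have "L * (norm w)\<^sup>2 \<le> norm w * norm v" .
  then have "L * norm w \<le> norm v"
    by (cases "norm w = 0") (auto simp: power2_eq_square mult.assoc[symmetric])
  then show ?thesis using L by (simp add: w_def field_simps)
qed

lemma inv_entry_bound:
  fixes G :: "real^'n^'n"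
  assumes inv: "invertible G" and L: "L > 0" and q: "\<And>u. L * (norm u)\<^sup>2 \<le> u \<bullet> (G *v u)"
  shows "\<bar>matrix_inv G $ i $ j\<bar> \<le> 1 / L"
proof -
  have "matrix_inv G $ i $ j = (matrix_inv G *v axis j 1) $ i"
    by (simp add: matrix_vector_mult_def axis_def if_distrib cong: if_cong)
  then have "\<bar>matrix_inv G $ i $ j\<bar> \<le> norm (matrix_inv G *v axis j 1)"
    by (metis component_le_norm_cart real_norm_def)
  also have "\<dots> \<le> norm (axis j (1::real)) / L" by (rule inv_bound[OF assms])
  finally show ?thesis by simp
qed

lemma inv_psd:
  fixes G :: "real^'n^'n"
  assumes inv: "invertible G" and q: "\<And>u. 0 \<le> u \<bullet> (G *v u)"
  shows "0 \<le> u \<bullet> (matrix_inv G *v u)"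
proof -
  define w where "w = matrix_inv G *v u"
  have Gw: "G *v w = u" using invertible_inv[OF inv] by (simp add: w_def matrix_vector_mul_assoc)
  have "u \<bullet> w = w \<bullet> (G *v w)" using Gw by (simp add: inner_commute)
  then show ?thesis using q[of w] by (simp add: w_def)
qed

lemma posdef_invertible:
  fixes B :: "real^'n^'n"
  assumes L: "L > 0" and q: "\<And>u. L * (norm u)\<^sup>2 \<le> u \<bullet> (B *v u)"
  shows "invertible B"
proof -
  have "\<forall>x. B *v x = 0 \<longrightarrow> x = 0"
  proof (intro allI impI)
    fix x assume "B *v x = 0"
    then have "L * (norm x)\<^sup>2 \<le> 0" using q[of x] by simp
    then show "x = 0" using L by (simp add: mult_le_0_iff)
  qed
  then show ?thesis using matrix_left_invertible_ker invertible_left_inverse by blast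
qed

lemma matrix_add_rdistrib': "((A::real^'n^'m) + B) ** C = A ** C + B ** C"
  by (simp add: matrix_matrix_mult_def vec_eq_iff sum.distrib distrib_right)

lemma W_entry_bound:
  fixes CO CI :: "real^'p^'p" and \<Delta> :: "real^'p"
  assumes e: "\<epsilon> > 0" and pO: "\<And>u. 0 \<le> u \<bullet> (CO *v u)" and pI: "\<And>u. 0 \<le> u \<bullet> (CI *v u)"
  defines "A \<equiv> CO + outer \<Delta> \<Delta> + \<epsilon> *\<^sub>R mat 1"
  shows "\<bar>(A ** matrix_inv (CI + A) - mat 1) $ i $ j\<bar> \<le> (\<Sum>k\<in>UNIV. \<bar>CI $ i $ k\<bar>) / \<epsilon>"
proof -
  have qA: "\<epsilon> * (norm u)\<^sup>2 \<le> u \<bullet> (A *v u)" for u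
  proof -
    have sm: "\<epsilon> *\<^sub>R mat 1 *v u = \<epsilon> *\<^sub>R u"
      by (metis matrix_vector_mul_lid scaleR_matrix_vector_assoc)
    have "u \<bullet> (A *v u) = u \<bullet> (CO *v u) + (\<Delta> \<bullet> u)\<^sup>2 + \<epsilon> * (u \<bullet> u)"
      by (simp add: A_def matrix_vector_mult_add_rdistrib outer_mulv inner_add_right
          power2_eq_square inner_commute sm)
    then show ?thesis using pO[of u] by (simp add: power2_norm_eq_inner)
  qed
  define B where "B = CI + A"
  have qB: "\<epsilon> * (norm u)\<^sup>2 \<le> u \<bullet> (B *v u)" for u
    using qA[of u] pI[of u] by (simp add: B_def matrix_vector_mult_add_rdistrib inner_add_right)
  have invB: "invertible B" by (rule posdef_invertible[OF e qB])
  have "A ** matrix_inv B - mat 1 = A ** matrix_inv B - B ** matrix_inv B"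
    using invertible_inv[OF invB] by simp
  also have "\<dots> = - (CI ** matrix_inv B)"
    by (simp add: B_def matrix_add_rdistrib')
  finally have eq: "A ** matrix_inv B - mat 1 = - (CI ** matrix_inv B)" .
  have "\<bar>(CI ** matrix_inv B) $ i $ j\<bar> = \<bar>\<Sum>k\<in>UNIV. CI $ i $ k * matrix_inv B $ k $ j\<bar>"
    by (simp add: matrix_matrix_mult_def)
  also have "\<dots> \<le> (\<Sum>k\<in>UNIV. \<bar>CI $ i $ k\<bar> * \<bar>matrix_inv B $ k $ j\<bar>)"
    by (rule order.trans[OF sum_abs]) (simp add: abs_mult)
  also have "\<dots> \<le> (\<Sum>k\<in>UNIV. \<bar>CI $ i $ k\<bar> * (1 / \<epsilon>))"
    by (intro sum_mono mult_left_mono inv_entry_bound[OF invB e qB]) auto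
  finally have "\<bar>(CI ** matrix_inv B) $ i $ j\<bar> \<le> (\<Sum>k\<in>UNIV. \<bar>CI $ i $ k\<bar>) / \<epsilon>"
    by (simp add: sum_divide_distrib)
  moreover have "(A ** matrix_inv B - mat 1) $ i $ j = - ((CI ** matrix_inv B) $ i $ j)"
    using eq by simp
  ultimately show ?thesis unfolding B_def by simp
qed

lemma sigma2_hat_nonneg: "0 \<le> sigma2_hat x y k"
proof (cases k)
  case (Suc k')
  then show ?thesis unfolding sigma2_hat_def by (intro divide_nonneg_nonneg sum_nonneg) auto
qed (simp add: sigma2_hat_def)

lemma gram_psd: "0 \<le> u \<bullet> (gram x k *v u)"
  by (simp add: gram_quad sum_nonneg)

lemma C_hat_psd:
  assumes "invertible (gram x k)"
  shows "0 \<le> u \<bullet> (C_hat x y k *v u)"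
proof -
  have "C_hat x y k *v u = sigma2_hat x y k *\<^sub>R (matrix_inv (gram x k) *v u)"
    by (simp add: C_hat_def scaleR_matrix_vector_assoc)
  then show ?thesis
    using inv_psd[OF assms gram_psd, of u] sigma2_hat_nonneg[of x y k] by simp
qed

lemma norm_matrix_le_entries: "norm (X::real^'n^'m) \<le> (\<Sum>i\<in>UNIV. \<Sum>j\<in>UNIV. \<bar>X $ i $ j\<bar>)"
proof -
  have "norm X \<le> (\<Sum>i\<in>UNIV. norm (X $ i))" by (simp add: norm_vec_def L2_set_le_sum)
  also have "\<dots> \<le> (\<Sum>i\<in>UNIV. \<Sum>j\<in>UNIV. \<bar>X $ i $ j\<bar>)"
    by (intro sum_mono) (use norm_le_l1_cart in auto)
  finally show ?thesis .
qed

lemma W_conv_det: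
  fixes xO xI :: "nat \<Rightarrow> real^'p" and yO yI :: "nat \<Rightarrow> real" and n :: "nat \<Rightarrow> nat"
  assumes e: "\<epsilon> > 0"
    and invO: "eventually (\<lambda>m. invertible (gram xO (n m))) sequentially"
    and sI: "eventually (\<lambda>m. sigma2_hat xI yI m \<le> K) sequentially"
    and gI: "\<And>L. L > 0 \<Longrightarrow> eventually (\<lambda>m. invertible (gram xI m) \<and>
                (\<forall>u. L * (norm u)\<^sup>2 \<le> u \<bullet> (gram xI m *v u))) sequentially"
  shows "(\<lambda>m. W_hat \<epsilon> xO yO xI yI (n m) m) \<longlonglongrightarrow> mat 1"
  unfolding tendsto_iff
proof (intro allI impI)
  fix r :: real assume r: "r > 0"
  define p where "p = real CARD('p)"
  have p: "p > 0" by (simp add: p_def)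
  define Kp where "Kp = \<bar>K\<bar> + 1"
  have Kp: "Kp > 0" by (simp add: Kp_def)
  define L where "L = 2 * p^3 * Kp / (\<epsilon> * r)"
  have L: "L > 0" using p Kp e r by (simp add: L_def)
  show "eventually (\<lambda>m. dist (W_hat \<epsilon> xO yO xI yI (n m) m) (mat 1) < r) sequentially"
    using invO sI gI[OF L]
  proof eventually_elim
    case (elim m)
    note invGO = elim(1) and sK = elim(2) and invGI = elim(3)[THEN conjunct1]
      and qI = elim(3)[THEN conjunct2, rule_format]
    define CI where "CI = C_hat xI yI m"
    have Centry: "\<bar>CI $ i $ k\<bar> \<le> Kp / L" for i k
    proof -
      have "\<bar>CI $ i $ k\<bar> = sigma2_hat xI yI m * \<bar>matrix_inv (gram xI m) $ i $ k\<bar>"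
        by (simp add: CI_def C_hat_def abs_mult sigma2_hat_nonneg)
      also have "\<dots> \<le> Kp * (1 / L)"
        by (intro mult_mono inv_entry_bound[OF invGI L qI])
           (use sK sigma2_hat_nonneg in \<open>auto simp: Kp_def\<close>)
      finally show ?thesis by simp
    qed
    let ?W = "W_hat \<epsilon> xO yO xI yI (n m) m"
    have entry: "\<bar>(?W - mat 1) $ i $ j\<bar> \<le> p * (Kp / L) / \<epsilon>" for i j
    proof -
      have "\<bar>(?W - mat 1) $ i $ j\<bar> \<le> (\<Sum>k\<in>UNIV. \<bar>CI $ i $ k\<bar>) / \<epsilon>"
        unfolding W_hat_def Let_def CI_def
        by (rule W_entry_bound[OF e C_hat_psd[OF invGO] C_hat_psd[OF invGI]])
      also have "\<dots> \<le> (\<Sum>k\<in>(UNIV::'p set). Kp / L) / \<epsilon>"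
        using e by (intro divide_right_mono sum_mono Centry) auto
      finally show ?thesis by (simp add: p_def)
    qed
    have "dist ?W (mat 1) \<le> (\<Sum>i\<in>(UNIV::'p set). \<Sum>j\<in>(UNIV::'p set). p * (Kp / L) / \<epsilon>)"
      unfolding dist_norm
      by (rule order.trans[OF norm_matrix_le_entries]) (intro sum_mono entry)
    also have "\<dots> = p^3 * Kp / (L * \<epsilon>)" by (simp add: p_def power3_eq_cube)
    also have "\<dots> = r / 2" using p Kp e r by (simp add: L_def field_simps power3_eq_cube)
    finally show ?case using r by simp
  qed
qed

lemma (in prob_space) indep_sets_reindex:
  assumes ind: "indep_sets F (f ` I)" and inj: "inj_on f I"
  shows "indep_sets (\<lambda>i. F (f i)) I"
  unfolding indep_sets_def
proof (intro conjI ballI allI impI)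
  fix i assume "i \<in> I" then show "F (f i) \<subseteq> events" using ind by (auto simp: indep_sets_def)
next
  fix J A assume J: "J \<subseteq> I" "J \<noteq> {}" "finite J" and A: "A \<in> Pi J (\<lambda>i. F (f i))"
  define g where "g = the_inv_into I f"
  have gf: "g (f i) = i" if "i \<in> J" for i using J that inj by (auto simp: g_def the_inv_into_f_f)
  define B where "B j = A (g j)" for j
  have B: "B \<in> Pi (f ` J) F" using A gf by (auto simp: B_def)
  have "prob (\<Inter>j\<in>f ` J. B j) = (\<Prod>j\<in>f ` J. prob (B j))"
    using ind J B unfolding indep_sets_def by (meson image_mono image_is_empty finite_imageI)
  moreover have "(\<Inter>j\<in>f ` J. B j) = (\<Inter>i\<in>J. A i)" using gf by (auto simp: B_def)
  moreover have "(\<Prod>j\<in>f ` J. prob (B j)) = (\<Prod>i\<in>J. prob (A i))"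
    using inj J gf by (subst prod.reindex) (auto simp: B_def intro: inj_on_subset)
  ultimately show "prob (\<Inter>j\<in>J. A j) = (\<Prod>j\<in>J. prob (A j))" by simp
qed

lemma (in prob_space) indep_vars_reindex:
  assumes ind: "indep_vars M' X (f ` I)" and inj: "inj_on f I"
  shows "indep_vars (\<lambda>i. M' (f i)) (\<lambda>i. X (f i)) I"
  using ind indep_sets_reindex[OF _ inj, of "\<lambda>j. sigma_sets (space M) {X j -` A \<inter> space M | A. A \<in> sets (M' j)}"]
  unfolding indep_vars_def by auto

lemma indep_Inr:
  assumes P: "prob_space M"
    and ind: "prob_space.indep_vars M (\<lambda>_. borel) (\<lambda>j \<omega>. case j of Inl k \<Rightarrow> f k \<omega> | Inr k \<Rightarrow> g k \<omega>) UNIV"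
    and h: "h \<in> borel_measurable borel"
  shows "prob_space.indep_vars M (\<lambda>_. borel) (\<lambda>k \<omega>. h (g k \<omega>)) UNIV"
proof -
  interpret prob_space M by fact
  have "indep_vars (\<lambda>_. borel) (\<lambda>j \<omega>. h (case j of Inl k \<Rightarrow> f k \<omega> | Inr k \<Rightarrow> g k \<omega>)) UNIV"
    by (rule indep_vars_compose2[OF ind h])
  then have "indep_vars (\<lambda>_. borel) (\<lambda>j \<omega>. h (case j of Inl k \<Rightarrow> f k \<omega> | Inr k \<Rightarrow> g k \<omega>)) (Inr ` UNIV)"
    by (rule indep_vars_subset) auto
  from indep_vars_reindex[OF this] show ?thesis by simp
qed

lemma (in prob_space) bc2:
  assumes ind: "indep_vars N X UNIV"
    and Pm: "\<And>i. {x\<in>space (N i). P i x} \<in> sets (N i)"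
    and q: "\<And>i. prob {\<omega>\<in>space M. P i (X i \<omega>)} = q" and qpos: "q > 0"
  shows "AE \<omega> in M. infinite {i::nat. P i (X i \<omega>)}"
proof -
  have indc: "indep_events (\<lambda>i. {\<omega>\<in>space M. \<not> P i (X i \<omega>)}) UNIV"
  proof (rule indep_eventsI_indep_vars[OF ind])
    fix i
    have "{x\<in>space (N i). \<not> P i x} = space (N i) - {x\<in>space (N i). P i x}" by auto
    then show "{x\<in>space (N i). \<not> P i x} \<in> sets (N i)" using Pm[of i] by auto
  qed
  have ev: "\<And>i. {\<omega>\<in>space M. P i (X i \<omega>)} \<in> events"
    using indep_eventsI_indep_vars[OF ind Pm] by (auto simp: indep_events_def)
  have evc: "\<And>i. {\<omega>\<in>space M. \<not> P i (X i \<omega>)} \<in> events"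
    using indc by (auto simp: indep_events_def)
  have pc: "prob {\<omega>\<in>space M. \<not> P i (X i \<omega>)} = 1 - q" for i
  proof -
    have "{\<omega>\<in>space M. \<not> P i (X i \<omega>)} = space M - {\<omega>\<in>space M. P i (X i \<omega>)}" by auto
    then show ?thesis using prob_compl[OF ev[of i]] q[of i] by simp
  qed
  have q1: "q \<le> 1" using q[of 0] by (metis prob_le_1)
  have "AE \<omega> in M. \<exists>i\<ge>J. P i (X i \<omega>)" for J
  proof (rule AE_I')
    define Nn where "Nn = (\<Inter>i\<in>{J..}. {\<omega>\<in>space M. \<not> P i (X i \<omega>)})"
    have Nev: "Nn \<in> events" unfolding Nn_def using evc by auto
    have le: "prob Nn \<le> (1 - q) ^ L" for L
    proof -
      have "prob Nn \<le> prob (\<Inter>i\<in>{J..<J+L+1}. {\<omega>\<in>space M. \<not> P i (X i \<omega>)})"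
        by (rule finite_measure_mono) (use evc in \<open>auto simp: Nn_def\<close>)
      also have "\<dots> = (\<Prod>i\<in>{J..<J+L+1}. prob {\<omega>\<in>space M. \<not> P i (X i \<omega>)})"
        using indc[unfolded indep_events_def, THEN conjunct2, rule_format, of "{J..<J+L+1}"] by simp
      also have "\<dots> = (1 - q) ^ (L + 1)" by (simp add: pc)
      also have "\<dots> \<le> (1 - q) ^ L" using q1 qpos by (intro power_decreasing) auto
      finally show ?thesis .
    qed
    have "(\<lambda>L. (1 - q) ^ L) \<longlonglongrightarrow> 0" using q1 qpos by (intro LIMSEQ_power_zero) auto
    then have "prob Nn \<le> 0" by (intro LIMSEQ_le_const[of _ 0]) (use le in auto)
    then have "prob Nn = 0" using measure_nonneg[of M Nn] by linarith
    then show "Nn \<in> null_sets M" using Nev by (intro null_setsI) (simp_all add: emeasure_eq_measure)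
    show "{\<omega>\<in>space M. \<not> (\<exists>i\<ge>J. P i (X i \<omega>))} \<subseteq> Nn" by (auto simp: Nn_def)
  qed
  then have "AE \<omega> in M. \<forall>J. \<exists>i\<ge>J. P i (X i \<omega>)" by (simp add: AE_all_countable)
  then show ?thesis
  proof (rule AE_mp[OF _ AE_I2], intro impI)
    fix \<omega> assume *: "\<forall>J. \<exists>i\<ge>J. P i (X i \<omega>)"
    show "infinite {i. P i (X i \<omega>)}"
    proof
      assume "finite {i. P i (X i \<omega>)}"
      then obtain B where "\<forall>i\<in>{i. P i (X i \<omega>)}. i < B" by (meson finite_nat_set_iff_bounded)
      with *[rule_format, of B] show False by auto
    qed
  qed
qed

lemma gauss_moments:
  assumes P: "prob_space M" and G: "centered_gaussian_real M V s"
  shows "integrable M (\<lambda>\<omega>. V \<omega> ^ 4)" "(\<integral>\<omega>. V \<omega> ^ 2 \<partial>M) = s" "(\<integral>\<omega>. V \<omega> ^ 4 \<partial>M) = 3 * s\<^sup>2"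
proof -
  interpret prob_space M by fact
  have Vm[measurable]: "V \<in> borel_measurable M" and s0: "0 \<le> s"
    and ch: "\<And>t. (\<integral>\<omega>. cis (t * V \<omega>) \<partial>M) = complex_of_real (exp (- (t\<^sup>2 * s) / 2))"
    using G by (auto simp: centered_gaussian_real_def)
  define c where "c = sqrt s"
  have c2: "c\<^sup>2 = s" using s0 by (simp add: c_def)
  interpret S: real_distribution std_normal_distribution by (rule real_dist_normal_dist)
  define D1 where "D1 = distr M borel V"
  define D2 where "D2 = distr std_normal_distribution borel (\<lambda>x. c * x)"
  have R1: "real_distribution D1" unfolding D1_def by simp
  have R2: "real_distribution D2" unfolding D2_def by (rule S.real_distribution_distr) simp
  have "char D1 = char D2"
  proof
    fix t
    have "char D1 t = (\<integral>\<omega>. iexp (t * V \<omega>) \<partial>M)"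
      unfolding char_def D1_def by (subst integral_distr) auto
    also have "\<dots> = complex_of_real (exp (- (t\<^sup>2 * s) / 2))"
      using ch[of t] by (simp add: cis_conv_exp)
    also have "\<dots> = char std_normal_distribution (t * c)"
      by (simp add: char_std_normal_distribution power_mult_distrib c2)
    also have "\<dots> = char D2 t"
      unfolding char_def D2_def by (subst integral_distr) (auto simp: mult.assoc)
    finally show "char D1 t = char D2 t" .
  qed
  then have D: "D1 = D2" by (rule Levy_uniqueness[OF R1 R2])
  have mom: "(\<integral>\<omega>. V \<omega> ^ k \<partial>M) = c ^ k * (\<integral>x. x ^ k \<partial>std_normal_distribution)" for k
  proof -
    have "(\<integral>\<omega>. V \<omega> ^ k \<partial>M) = (\<integral>x. x ^ k \<partial>D1)" unfolding D1_def by (subst integral_distr) auto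
    also have "\<dots> = (\<integral>x. x ^ k \<partial>D2)" by (simp add: D)
    also have "\<dots> = (\<integral>x. (c * x) ^ k \<partial>std_normal_distribution)" unfolding D2_def by (subst integral_distr) auto
    also have "\<dots> = c ^ k * (\<integral>x. x ^ k \<partial>std_normal_distribution)" by (simp add: power_mult_distrib)
    finally show ?thesis .
  qed
  have "integrable D2 (\<lambda>x. x ^ 4)"
    unfolding D2_def by (subst integrable_distr_eq) (auto simp: power_mult_distrib intro!: integrable_std_normal_distribution_moment)
  then have "integrable D1 (\<lambda>x. x ^ 4)" by (simp add: D)
  then show "integrable M (\<lambda>\<omega>. V \<omega> ^ 4)" unfolding D1_def by (subst (asm) integrable_distr_eq) auto
  have m2: "(\<integral>x. x ^ 2 \<partial>std_normal_distribution) = 1"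
    using std_normal_distribution_even_moments(1)[of 1] by simp
  have m4: "(\<integral>x. x ^ 4 \<partial>std_normal_distribution) = 3"
    using std_normal_distribution_even_moments(1)[of 2] by (simp add: fact_numeral)
  show "(\<integral>\<omega>. V \<omega> ^ 2 \<partial>M) = s" using mom[of 2] m2 c2 by simp
  have "c ^ 4 = s\<^sup>2" using c2 by (metis power_mult num_double numeral_times_numeral)
  then show "(\<integral>\<omega>. V \<omega> ^ 4 \<partial>M) = 3 * s\<^sup>2" using mom[of 4] m4 by simp
qed

lemma sqrt_bracket: "\<exists>k::nat. k * k \<le> m \<and> m < (k + 1) * (k + 1)"
proof (induction m)
  case 0 show ?case by (intro exI[of _ 0]) simp
next
  case (Suc m)
  then obtain k where k: "k * k \<le> m" "m < (k + 1) * (k + 1)" by blast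
  show ?case
  proof (cases "Suc m < (k + 1) * (k + 1)")
    case True then show ?thesis using k by (intro exI[of _ k]) simp
  next
    case False
    then have "Suc m = (k + 1) * (k + 1)" using k by simp
    then show ?thesis by (intro exI[of _ "k + 1"]) (simp add: algebra_simps)
  qed
qed

lemma sq_le_1_plus_4: "(x::real)\<^sup>2 \<le> 1 + x ^ 4"
proof -
  have "0 \<le> (x\<^sup>2 - 1)\<^sup>2" by simp
  then have "0 \<le> x ^ 4 - 2 * x\<^sup>2 + 1" by (simp add: power2_eq_square algebra_simps power4_eq_xxxx)
  moreover have "0 \<le> x\<^sup>2" by simp
  ultimately show ?thesis by linarith
qed

lemma abs_mult_le_sq: "\<bar>u::real\<bar> * \<bar>v\<bar> \<le> u\<^sup>2 + v\<^sup>2"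
proof -
  have "0 \<le> (\<bar>u\<bar> - \<bar>v\<bar>)\<^sup>2" by simp
  then have "2 * (\<bar>u\<bar> * \<bar>v\<bar>) \<le> u\<^sup>2 + v\<^sup>2" by (simp add: power2_eq_square algebra_simps)
  moreover have "0 \<le> \<bar>u\<bar> * \<bar>v\<bar>" by simp
  ultimately show ?thesis by linarith
qed

lemma aux_div: "(real ((Suc k)\<^sup>2) * \<mu>) / (real (Suc k))\<^sup>2 ^ 2 = \<mu> * inverse (real (Suc k) ^ 2)"
proof -
  have "real ((Suc k)\<^sup>2) = (real (Suc k))\<^sup>2" by simp
  moreover have "(r\<^sup>2 * \<mu>) / (r\<^sup>2)\<^sup>2 = \<mu> * inverse (r^2)" if "(r::real) > 0" for r
    using that by (simp add: power2_eq_square field_simps)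
  ultimately show ?thesis by (metis of_nat_0_less_iff zero_less_Suc)
qed

lemma (in prob_space) slln_sq:
  fixes a :: "nat \<Rightarrow> 'a \<Rightarrow> real"
  assumes ind: "indep_vars (\<lambda>_. borel) a UNIV"
    and int4: "\<And>i. integrable M (\<lambda>\<omega>. a i \<omega> ^ 4)"
    and m2: "\<And>i. (\<integral>\<omega>. a i \<omega> ^ 2 \<partial>M) = s"
    and m4: "\<And>i. (\<integral>\<omega>. a i \<omega> ^ 4 \<partial>M) \<le> \<mu>"
  shows "AE \<omega> in M. \<exists>C. eventually (\<lambda>m. (\<Sum>i<m. (a i \<omega>)\<^sup>2) \<le> C * real m) sequentially"
proof -
  have am[measurable]: "a i \<in> borel_measurable M" for i using ind by (auto simp: indep_vars_def)
  have int2: "integrable M (\<lambda>\<omega>. a i \<omega> ^ 2)" for i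
    by (rule Bochner_Integration.integrable_bound[of _ "\<lambda>\<omega>. 1 + a i \<omega> ^ 4"])
       (use int4 sq_le_1_plus_4 in auto)
  define b where "b i \<omega> = a i \<omega> ^ 2 - s" for i \<omega>
  have bm[measurable]: "b i \<in> borel_measurable M" for i unfolding b_def by measurable
  have intb: "integrable M (b i)" for i unfolding b_def using int2 by auto
  have b2: "b i \<omega> ^ 2 = a i \<omega> ^ 4 - 2 * s * a i \<omega> ^ 2 + s\<^sup>2" for i \<omega>
    by (simp add: b_def power2_eq_square algebra_simps power4_eq_xxxx)
  have intb2: "integrable M (\<lambda>\<omega>. b i \<omega> ^ 2)" for i
    unfolding b2 using int2 int4 by auto
  have Eb: "(\<integral>\<omega>. b i \<omega> \<partial>M) = 0" for i
    using int2 m2 by (simp add: b_def prob_space)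
  have Eb2: "(\<integral>\<omega>. b i \<omega> ^ 2 \<partial>M) \<le> \<mu>" for i
  proof -
    have "(\<integral>\<omega>. b i \<omega> ^ 2 \<partial>M) = (\<integral>\<omega>. a i \<omega> ^ 4 \<partial>M) - 2 * s * s + s\<^sup>2"
      unfolding b2 using int2 int4 m2 by (simp add: prob_space)
    also have "\<dots> \<le> \<mu>" using m4[of i] zero_le_square[of s] by (simp add: power2_eq_square del: zero_le_square)
    finally show ?thesis .
  qed
  have indb: "indep_vars (\<lambda>_. borel) b UNIV"
    unfolding b_def by (rule indep_vars_compose2[OF ind]) auto
  have intbb: "integrable M (\<lambda>\<omega>. b i \<omega> * b j \<omega>)" for i j
    by (rule Bochner_Integration.integrable_bound[of _ "\<lambda>\<omega>. b i \<omega> ^ 2 + b j \<omega> ^ 2"])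
       (use intb2 in \<open>auto simp: abs_mult intro!: AE_I2 abs_mult_le_sq\<close>)
  have Ebb: "(\<integral>\<omega>. b i \<omega> * b j \<omega> \<partial>M) = 0" if "i \<noteq> j" for i j
  proof -
    have "indep_vars (\<lambda>_. borel) b {i, j}" by (rule indep_vars_subset[OF indb]) auto
    from indep_vars_lebesgue_integral[OF _ this] that intb
    have "(\<integral>\<omega>. (\<Prod>k\<in>{i,j}. b k \<omega>) \<partial>M) = (\<Prod>k\<in>{i,j}. \<integral>\<omega>. b k \<omega> \<partial>M)" by auto
    then show ?thesis using that Eb by simp
  qed
  define T where "T N \<omega> = (\<Sum>i<N. b i \<omega>)" for N \<omega>
  have Tm[measurable]: "T N \<in> borel_measurable M" for N unfolding T_def by measurable
  have T2: "T N \<omega> ^ 2 = (\<Sum>i<N. \<Sum>j<N. b i \<omega> * b j \<omega>)" for N \<omega>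
    by (simp add: T_def power2_eq_square sum_product)
  have intT2: "integrable M (\<lambda>\<omega>. T N \<omega> ^ 2)" for N
    unfolding T2 using intbb by auto
  have ET2: "(\<integral>\<omega>. T N \<omega> ^ 2 \<partial>M) \<le> real N * \<mu>" for N
  proof -
    have "(\<integral>\<omega>. T N \<omega> ^ 2 \<partial>M) = (\<Sum>i<N. \<Sum>j<N. \<integral>\<omega>. b i \<omega> * b j \<omega> \<partial>M)"
      unfolding T2 using intbb by (simp add: Bochner_Integration.integral_sum)
    also have "\<dots> = (\<Sum>i<N. \<integral>\<omega>. b i \<omega> ^ 2 \<partial>M)"
    proof (rule sum.cong[OF refl])
      fix i assume i: "i \<in> {..<N}"
      have "(\<Sum>j<N. \<integral>\<omega>. b i \<omega> * b j \<omega> \<partial>M) = (\<Sum>j\<in>{i}. \<integral>\<omega>. b i \<omega> * b j \<omega> \<partial>M)"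
        using i by (intro sum.mono_neutral_right) (auto simp: Ebb)
      then show "(\<Sum>j<N. \<integral>\<omega>. b i \<omega> * b j \<omega> \<partial>M) = (\<integral>\<omega>. b i \<omega> ^ 2 \<partial>M)"
        by (simp add: power2_eq_square)
    qed
    also have "\<dots> \<le> (\<Sum>i<N. \<mu>)" by (intro sum_mono Eb2)
    finally show ?thesis by simp
  qed
  have "0 \<le> (\<integral>\<omega>. b 0 \<omega> ^ 2 \<partial>M)" by (rule integral_nonneg_AE) auto
  then have mu0: "0 \<le> \<mu>" using Eb2[of 0] by linarith
  define A where "A k = {\<omega>\<in>space M. (real (Suc k))\<^sup>2 ^ 2 \<le> T ((Suc k)\<^sup>2) \<omega> ^ 2}" for k
  have Am[measurable]: "A k \<in> sets M" for k unfolding A_def by measurable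
  have PA: "measure M (A k) \<le> \<mu> * inverse (real (Suc k) ^ 2)" for k
  proof -
    have "measure M (A k) \<le> (\<integral>\<omega>. T ((Suc k)\<^sup>2) \<omega> ^ 2 \<partial>M) / (real (Suc k))\<^sup>2 ^ 2"
      unfolding A_def by (rule integral_Markov_inequality_measure[OF intT2, of "space M"]) auto
    also have "\<dots> \<le> (real ((Suc k)\<^sup>2) * \<mu>) / (real (Suc k))\<^sup>2 ^ 2"
      by (intro divide_right_mono ET2) auto
    also have "\<dots> = \<mu> * inverse (real (Suc k) ^ 2)"
      by (rule aux_div)
    finally show ?thesis .
  qed
  have sumA: "summable (\<lambda>k. measure M (A k))"
  proof (rule summable_comparison_test)
    show "summable (\<lambda>k. \<mu> * inverse (real (Suc k) ^ 2))"
    proof (rule summable_mult)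
      have s1: "summable (\<lambda>n. inverse (real n ^ 2))" by (rule inverse_power_summable) simp
      show "summable (\<lambda>n. inverse (real (Suc n) ^ 2))"
        using summable_Suc_iff[THEN iffD2, OF s1] by simp
    qed
    show "\<exists>N. \<forall>n\<ge>N. norm (measure M (A n)) \<le> \<mu> * inverse (real (Suc n) ^ 2)"
      using PA by auto
  qed
  have "AE \<omega> in M. eventually (\<lambda>k. \<omega> \<in> space M - A k) sequentially"
    by (rule borel_cantelli_AE1[OF Am _ sumA]) (simp add: emeasure_eq_measure)
  then show ?thesis
  proof (rule AE_mp[OF _ AE_I2], intro impI)
    fix \<omega> assume ev: "eventually (\<lambda>k. \<omega> \<in> space M - A k) sequentially" and \<omega>: "\<omega> \<in> space M"
    then obtain K0 where K0: "\<And>k. k \<ge> K0 \<Longrightarrow> \<omega> \<notin> A k" by (auto simp: eventually_sequentially)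
    have bnd: "(\<Sum>i<(Suc k)\<^sup>2. (a i \<omega>)\<^sup>2) \<le> (\<bar>s\<bar> + 1) * (real (Suc k))\<^sup>2" if "k \<ge> K0" for k
    proof -
      have "T ((Suc k)\<^sup>2) \<omega> ^ 2 < ((real (Suc k))\<^sup>2) ^ 2" using K0[OF that] \<omega> by (auto simp: A_def)
      then have "T ((Suc k)\<^sup>2) \<omega> < (real (Suc k))\<^sup>2"
        using power2_less_imp_less[of "T ((Suc k)\<^sup>2) \<omega>"] abs_less_iff
        by (metis abs_power2 power2_abs abs_ge_self le_less_trans power_less_imp_less_base zero_le_power2)
      moreover have "T ((Suc k)\<^sup>2) \<omega> = (\<Sum>i<(Suc k)\<^sup>2. (a i \<omega>)\<^sup>2) - real ((Suc k)\<^sup>2) * s"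
        by (simp add: T_def b_def sum_subtractf)
      ultimately show ?thesis by (simp add: algebra_simps) (smt (verit) abs_ge_self mult_right_mono zero_le_power2)
    qed
    show "\<exists>C. eventually (\<lambda>m. (\<Sum>i<m. (a i \<omega>)\<^sup>2) \<le> C * real m) sequentially"
    proof (intro exI[of _ "4 * (\<bar>s\<bar> + 1)"], unfold eventually_sequentially, intro exI[of _ "(Suc K0)\<^sup>2"] allI impI)
      fix m assume m: "(Suc K0)\<^sup>2 \<le> m"
      obtain k where k: "k * k \<le> m" "m < (k + 1) * (k + 1)" using sqrt_bracket by blast
      have "Suc K0 * Suc K0 < Suc k * Suc k" using m k by (simp add: power2_eq_square)
      then have kK: "K0 \<le> k"
      proof (rule contrapos_pp)
        assume "\<not> K0 \<le> k"
        then have "Suc k \<le> Suc K0" by simp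
        then have "Suc k * Suc k \<le> Suc K0 * Suc K0" by (intro mult_le_mono)
        then show "\<not> Suc K0 * Suc K0 < Suc k * Suc k" by simp
      qed
      have k1: "1 \<le> k" using kK m k by (cases k) (auto simp: power2_eq_square)
      have "(\<Sum>i<m. (a i \<omega>)\<^sup>2) \<le> (\<Sum>i<(Suc k)\<^sup>2. (a i \<omega>)\<^sup>2)"
        using k by (intro sum_mono2) (auto simp: power2_eq_square)
      also have "\<dots> \<le> (\<bar>s\<bar> + 1) * (real (Suc k))\<^sup>2" by (rule bnd[OF kK])
      also have "\<dots> \<le> (\<bar>s\<bar> + 1) * (4 * real m)"
      proof (rule mult_left_mono)
        have "real (Suc k) \<le> 2 * real k" using k1 by simp
        then have "(real (Suc k))\<^sup>2 \<le> (2 * real k)\<^sup>2" by (intro power_mono) auto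
        also have "\<dots> = 4 * real (k * k)" by (simp add: power2_eq_square)
        also have "\<dots> \<le> 4 * real m" using k(1) by (simp only: of_nat_le_iff mult_le_cancel_left) simp
        finally show "(real (Suc k))\<^sup>2 \<le> 4 * real m" .
      qed simp
      finally show "(\<Sum>i<m. (a i \<omega>)\<^sup>2) \<le> 4 * (\<bar>s\<bar> + 1) * real m" by (simp add: algebra_simps)
    qed
  qed
qed

lemma eventually_card_ge:
  assumes "infinite S"
  shows "eventually (\<lambda>m. c \<le> card (S \<inter> {..<m})) sequentially"
proof -
  obtain A where A: "finite A" "card A = c" "A \<subseteq> S" using infinite_arbitrarily_large[OF assms] by blast
  from A(1) obtain N where N': "\<forall>a\<in>A. a < N" unfolding finite_nat_set_iff_bounded by blast
  then have N: "\<And>a. a \<in> A \<Longrightarrow> a < N" by blast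
  show ?thesis unfolding eventually_sequentially
  proof (intro exI[of _ N] allI impI)
    fix m assume Nm: "N \<le> m"
    have "a < m" if "a \<in> A" for a using N[OF that] Nm by simp
    then have "A \<subseteq> S \<inter> {..<m}" using A(3) by auto
    then have "card A \<le> card (S \<inter> {..<m})" by (intro card_mono) auto
    then show "c \<le> card (S \<inter> {..<m})" using A(2) by simp
  qed
qed

lemma gram_quad_scale: "(c *\<^sub>R w) \<bullet> (gram x m *v (c *\<^sub>R w)) = c\<^sup>2 * (w \<bullet> (gram x m *v w))"
  by (simp add: gram_quad sum_distrib_left power_mult_distrib inner_commute)

lemma quad_lower_det:
  fixes x :: "nat \<Rightarrow> real^'p" and K :: "(real^'p) set"
  assumes fin: "finite K"
    and cover: "sphere 0 1 \<subseteq> (\<Union>u\<in>K. ball u (\<eta> u / (2 * R u)))"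
    and pos: "\<And>u. u \<in> K \<Longrightarrow> \<eta> u > 0 \<and> R u > 0"
    and inf: "\<And>u. u \<in> K \<Longrightarrow> infinite {i. \<eta> u < \<bar>u \<bullet> x i\<bar> \<and> norm (x i) \<le> R u}"
    and L: "L > 0"
  shows "eventually (\<lambda>m. \<forall>v. L * (norm v)\<^sup>2 \<le> v \<bullet> (gram x m *v v)) sequentially"
proof -
  define S where "S u = {i. \<eta> u < \<bar>u \<bullet> x i\<bar> \<and> norm (x i) \<le> R u}" for u
  define c where "c u = nat \<lceil>4 * L / (\<eta> u)\<^sup>2\<rceil>" for u
  have "eventually (\<lambda>m. \<forall>u\<in>K. c u \<le> card (S u \<inter> {..<m})) sequentially"
    using fin inf by (intro eventually_ball_finite) (auto simp: S_def intro: eventually_card_ge)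
  then show ?thesis
  proof eventually_elim
    case (elim m)
    show ?case
    proof
      fix v :: "real^'p"
      show "L * (norm v)\<^sup>2 \<le> v \<bullet> (gram x m *v v)"
      proof (cases "v = 0")
        case True then show ?thesis by simp
      next
        case False
        define w where "w = (1 / norm v) *\<^sub>R v"
        have nw: "norm w = 1" using False by (simp add: w_def)
        have vw: "v = norm v *\<^sub>R w" using False by (simp add: w_def)
        have "w \<in> sphere 0 1" using nw by simp
        then have "w \<in> (\<Union>u\<in>K. ball u (\<eta> u / (2 * R u)))" using cover by blast
        then obtain u where u: "u \<in> K" "dist u w < \<eta> u / (2 * R u)"
          by (auto simp only: UN_iff mem_ball)
        have eta: "\<eta> u > 0" and R: "R u > 0" using pos[OF u(1)] by auto
        have big: "(\<eta> u)\<^sup>2 / 4 \<le> (x i \<bullet> w)\<^sup>2" if i: "i \<in> S u" for i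
        proof -
          have xi: "\<eta> u < \<bar>u \<bullet> x i\<bar>" "norm (x i) \<le> R u" using i by (auto simp: S_def)
          have "\<bar>(u - w) \<bullet> x i\<bar> \<le> norm (u - w) * norm (x i)" by (rule Cauchy_Schwarz_ineq2)
          also have "\<dots> \<le> (\<eta> u / (2 * R u)) * R u"
            using u(2) xi(2) eta R by (intro mult_mono) (auto simp: dist_norm)
          also have "\<dots> = \<eta> u / 2" using R by simp
          finally have "\<bar>(u - w) \<bullet> x i\<bar> \<le> \<eta> u / 2" .
          moreover have "u \<bullet> x i = (u - w) \<bullet> x i + w \<bullet> x i" by (simp add: inner_diff_left)
          moreover have "w \<bullet> x i = x i \<bullet> w" by (rule inner_commute)
          ultimately have "\<eta> u / 2 \<le> \<bar>x i \<bullet> w\<bar>" using xi(1) by linarith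
          then have "(\<eta> u / 2)\<^sup>2 \<le> (\<bar>x i \<bullet> w\<bar>)\<^sup>2" using eta by (intro power_mono) auto
          then show ?thesis by (simp add: power_divide)
        qed
        have "L \<le> real (c u) * ((\<eta> u)\<^sup>2 / 4)"
        proof -
          have "4 * L / (\<eta> u)\<^sup>2 \<le> real (c u)" unfolding c_def by (rule real_nat_ceiling_ge)
          then show ?thesis using eta by (simp add: field_simps)
        qed
        also have "\<dots> \<le> real (card (S u \<inter> {..<m})) * ((\<eta> u)\<^sup>2 / 4)"
          using elim u(1) by (intro mult_right_mono) auto
        also have "\<dots> = (\<Sum>i\<in>S u \<inter> {..<m}. (\<eta> u)\<^sup>2 / 4)" by simp
        also have "\<dots> \<le> (\<Sum>i\<in>S u \<inter> {..<m}. (x i \<bullet> w)\<^sup>2)" by (intro sum_mono big) auto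
        also have "\<dots> \<le> (\<Sum>i<m. (x i \<bullet> w)\<^sup>2)" by (intro sum_mono2) auto
        also have "\<dots> = w \<bullet> (gram x m *v w)" by (simp add: gram_quad)
        finally have "L \<le> w \<bullet> (gram x m *v w)" .
        then have "L * (norm v)\<^sup>2 \<le> (norm v)\<^sup>2 * (w \<bullet> (gram x m *v w))"
          by (subst mult.commute) (rule mult_left_mono, auto)
        also have "\<dots> = v \<bullet> (gram x m *v v)" using gram_quad_scale[of "norm v" w x m] vw by simp
        finally show ?thesis .
      qed
    qed
  qed
qed

lemma (in prob_space) quad_lower_AE:
  fixes X :: "nat \<Rightarrow> 'a \<Rightarrow> real^'p"
  assumes ind: "indep_vars (\<lambda>_. borel) X UNIV"
    and dst: "\<And>k. distr M borel (X k) = distr M borel (X 0)"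
    and inv: "AE \<omega> in M. eventually (\<lambda>m. invertible (gram (\<lambda>k. X k \<omega>) m)) sequentially"
  shows "AE \<omega> in M. \<forall>L>0. eventually (\<lambda>m. \<forall>v. L * (norm v)\<^sup>2 \<le> v \<bullet> (gram (\<lambda>k. X k \<omega>) m *v v)) sequentially"
proof -
  have Xm[measurable]: "X k \<in> borel_measurable M" for k using ind by (auto simp: indep_vars_def)
  have probeq: "prob {\<omega>\<in>space M. X k \<omega> \<in> B} = prob {\<omega>\<in>space M. X 0 \<omega> \<in> B}" if B: "B \<in> sets borel" for k B
  proof -
    have "prob {\<omega>\<in>space M. X k \<omega> \<in> B} = measure (distr M borel (X k)) B"
      using B by (subst measure_distr) (auto intro!: arg_cong[where f=prob])
    also have "\<dots> = measure (distr M borel (X 0)) B" by (simp add: dst[of k])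
    also have "\<dots> = prob {\<omega>\<in>space M. X 0 \<omega> \<in> B}"
      using B by (subst measure_distr) (auto intro!: arg_cong[where f=prob])
    finally show ?thesis .
  qed
  have step1: "\<exists>\<eta> R. \<eta> > 0 \<and> R > 0 \<and> prob {\<omega>\<in>space M. \<eta> < \<bar>u \<bullet> X 0 \<omega>\<bar> \<and> norm (X 0 \<omega>) \<le> R} > 0"
    if u: "norm u = 1" for u :: "real^'p"
  proof (rule ccontr)
    assume "\<not> ?thesis"
    then have z: "prob {\<omega>\<in>space M. \<eta> < \<bar>u \<bullet> X 0 \<omega>\<bar> \<and> norm (X 0 \<omega>) \<le> R} = 0"
      if "\<eta> > 0" "R > 0" for \<eta> R
      using that measure_nonneg[of M] by (meson not_less order.antisym)
    define E where "E n = {\<omega>\<in>space M. 1 / (real n + 1) < \<bar>u \<bullet> X 0 \<omega>\<bar> \<and> norm (X 0 \<omega>) \<le> real n + 1}" for n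
    have Em[measurable]: "E n \<in> sets M" for n unfolding E_def by measurable
    have En: "E n \<in> null_sets M" for n
      using z[of "1 / (real n + 1)" "real n + 1"] Em[of n]
      by (intro null_setsI) (auto simp: E_def emeasure_eq_measure)
    define Z where "Z = {\<omega>\<in>space M. u \<bullet> X 0 \<omega> \<noteq> 0}"
    have Zm: "Z \<in> sets M" unfolding Z_def by measurable
    have "Z \<subseteq> (\<Union>n. E n)"
    proof
      fix \<omega> assume "\<omega> \<in> Z"
      then have \<omega>: "\<omega> \<in> space M" and t: "\<bar>u \<bullet> X 0 \<omega>\<bar> > 0" by (auto simp: Z_def)
      define n where "n = nat \<lceil>max (1 / \<bar>u \<bullet> X 0 \<omega>\<bar>) (norm (X 0 \<omega>))\<rceil>"
      have n1: "1 / \<bar>u \<bullet> X 0 \<omega>\<bar> \<le> real n" and n2: "norm (X 0 \<omega>) \<le> real n"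
        unfolding n_def by (meson max.boundedE real_nat_ceiling_ge order.trans)+
      have "1 / (real n + 1) < \<bar>u \<bullet> X 0 \<omega>\<bar>"
        using n1 t by (simp add: field_simps)
      then show "\<omega> \<in> (\<Union>n. E n)" using n2 \<omega> by (auto simp: E_def intro!: exI[of _ n])
    qed
    then have "Z = Z \<inter> (\<Union>n. E n)" by blast
    moreover have "Z \<inter> (\<Union>n. E n) \<in> null_sets M" using null_sets_UN[of E, OF En] Zm by (rule null_set_Int1)
    ultimately have "Z \<in> null_sets M" by simp
    then have "prob Z = 0" by (auto simp: measure_def)
    then have pk: "prob {\<omega>\<in>space M. u \<bullet> X k \<omega> \<noteq> 0} = 0" for k
      using probeq[of "{x. u \<bullet> x \<noteq> 0}" k] by (simp add: Z_def)
    have "AE \<omega> in M. u \<bullet> X k \<omega> = 0" for k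
    proof -
      have "{\<omega>\<in>space M. u \<bullet> X k \<omega> \<noteq> 0} \<in> sets M" by measurable
      from prob_eq_0[OF this] pk[of k] show ?thesis by auto
    qed
    then have "AE \<omega> in M. \<forall>k. u \<bullet> X k \<omega> = 0" by (simp add: AE_all_countable)
    with inv have "AE \<omega> in M. eventually (\<lambda>m. invertible (gram (\<lambda>k. X k \<omega>) m)) sequentially \<and> (\<forall>k. u \<bullet> X k \<omega> = 0)"
      by (rule eventually_conj)
    then have "AE \<omega> in M. False"
    proof (rule eventually_mono, elim conjE)
      fix \<omega> assume ev: "eventually (\<lambda>m. invertible (gram (\<lambda>k. X k \<omega>) m)) sequentially"
        and zero: "\<forall>k. u \<bullet> X k \<omega> = 0"
      obtain m where im: "invertible (gram (\<lambda>k. X k \<omega>) m)" using ev eventually_sequentially by auto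
      have "gram (\<lambda>k. X k \<omega>) m *v u = 0" using zero by (simp add: gram_mulv inner_commute)
      moreover have "gram (\<lambda>k. X k \<omega>) m *v 0 = 0" by simp
      ultimately have "u = 0" using inj_matrix_vector_mult[OF im] by (metis injD)
      then show False using u by simp
    qed
    then have "prob {\<omega>\<in>space M. True} = 0" by (intro prob_eq_0_AE) auto
    then show False by (simp add: prob_space)
  qed
  have ex: "\<forall>u\<in>sphere 0 1. \<exists>p. fst p > 0 \<and> snd p > 0 \<and>
      prob {\<omega>\<in>space M. fst p < \<bar>u \<bullet> X 0 \<omega>\<bar> \<and> norm (X 0 \<omega>) \<le> snd p} > 0"
  proof
    fix u :: "real^'p" assume "u \<in> sphere 0 1"
    then have "norm u = 1" by simp
    from step1[OF this] obtain \<eta> R where "\<eta> > 0 \<and> R > 0 \<and> prob {\<omega>\<in>space M. \<eta> < \<bar>u \<bullet> X 0 \<omega>\<bar> \<and> norm (X 0 \<omega>) \<le> R} > 0"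
      by blast
    then show "\<exists>p. fst p > 0 \<and> snd p > 0 \<and> prob {\<omega>\<in>space M. fst p < \<bar>u \<bullet> X 0 \<omega>\<bar> \<and> norm (X 0 \<omega>) \<le> snd p} > 0"
      by (intro exI[of _ "(\<eta>, R)"]) simp
  qed
  obtain g where g: "\<And>u. u \<in> sphere 0 1 \<Longrightarrow> fst (g u) > 0 \<and> snd (g u) > 0 \<and>
      prob {\<omega>\<in>space M. fst (g u) < \<bar>u \<bullet> X 0 \<omega>\<bar> \<and> norm (X 0 \<omega>) \<le> snd (g u)} > 0"
    using bchoice[OF ex] by blast
  define \<eta> where "\<eta> u = fst (g u)" for u
  define R where "R u = snd (g u)" for u
  have cov0: "sphere (0::real^'p) 1 \<subseteq> (\<Union>u\<in>sphere 0 1. ball u (\<eta> u / (2 * R u)))"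
  proof
    fix u :: "real^'p" assume u: "u \<in> sphere 0 1"
    then have "\<eta> u / (2 * R u) > 0" using g[OF u] by (simp add: \<eta>_def R_def)
    then have "u \<in> ball u (\<eta> u / (2 * R u))" by simp
    then show "u \<in> (\<Union>u\<in>sphere 0 1. ball u (\<eta> u / (2 * R u)))" using u by blast
  qed
  obtain K where K: "K \<subseteq> sphere 0 1" "finite K" "sphere 0 1 \<subseteq> (\<Union>u\<in>K. ball u (\<eta> u / (2 * R u)))"
    by (rule compactE_image[OF compact_sphere _ cov0]) auto
  have "AE \<omega> in M. infinite {i. \<eta> u < \<bar>u \<bullet> X i \<omega>\<bar> \<and> norm (X i \<omega>) \<le> R u}" if u: "u \<in> K" for u
  proof (rule bc2[OF ind])
    show "{x \<in> space borel. \<eta> u < \<bar>u \<bullet> x\<bar> \<and> norm x \<le> R u} \<in> sets borel" for i :: nat by measurable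
    have B: "{x. \<eta> u < \<bar>u \<bullet> x\<bar> \<and> norm x \<le> R u} \<in> sets borel" by measurable
    show "prob {\<omega> \<in> space M. \<eta> u < \<bar>u \<bullet> X i \<omega>\<bar> \<and> norm (X i \<omega>) \<le> R u} =
          prob {\<omega> \<in> space M. \<eta> u < \<bar>u \<bullet> X 0 \<omega>\<bar> \<and> norm (X 0 \<omega>) \<le> R u}" for i
      using probeq[OF B, of i] by simp
    show "prob {\<omega> \<in> space M. \<eta> u < \<bar>u \<bullet> X 0 \<omega>\<bar> \<and> norm (X 0 \<omega>) \<le> R u} > 0"
      using g[of u] u K(1) by (auto simp: \<eta>_def R_def)
  qed
  then have "AE \<omega> in M. \<forall>u\<in>K. infinite {i. \<eta> u < \<bar>u \<bullet> X i \<omega>\<bar> \<and> norm (X i \<omega>) \<le> R u}"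
    using K(2) by (intro eventually_ball_finite) auto
  then show ?thesis
  proof (rule eventually_mono, intro allI impI)
    fix \<omega> L assume inf: "\<forall>u\<in>K. infinite {i. \<eta> u < \<bar>u \<bullet> X i \<omega>\<bar> \<and> norm (X i \<omega>) \<le> R u}"
      and L: "(L::real) > 0"
    show "eventually (\<lambda>m. \<forall>v. L * (norm v)\<^sup>2 \<le> v \<bullet> (gram (\<lambda>k. X k \<omega>) m *v v)) sequentially"
    proof (rule quad_lower_det[OF K(2) K(3) _ _ L])
      show "\<eta> u > 0 \<and> R u > 0" if "u \<in> K" for u using g[of u] that K(1) by (auto simp: \<eta>_def R_def)
      show "infinite {i. \<eta> u < \<bar>u \<bullet> X i \<omega>\<bar> \<and> norm (X i \<omega>) \<le> R u}" if "u \<in> K" for u using inf that by auto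
    qed
  qed
qed

lemma meas_proj:
  "(\<lambda>t::(real^'d) \<times> (real^'p) \<times> real. fst (snd t)) \<in> borel_measurable borel"
  "(\<lambda>t::(real^'d) \<times> (real^'p) \<times> real. snd (snd t)) \<in> borel_measurable borel"
  "(\<lambda>t::(real^'d) \<times> (real^'p) \<times> real. fst t \<bullet> \<gamma>) \<in> borel_measurable borel"
  by (intro borel_measurable_continuous_onI continuous_intros)+

lemma sigma_bound:
  assumes inv: "invertible (gram x m)" and m: "m \<ge> 2"
    and e: "\<And>i. y i - x i \<bullet> \<alpha> = e1 i + e2 i"
    and s1: "(\<Sum>i<m. (e1 i)\<^sup>2) \<le> Ca * real m" and s2: "(\<Sum>i<m. (e2 i)\<^sup>2) \<le> Cb * real m"
  shows "sigma2_hat x y m \<le> 4 * (\<bar>Ca\<bar> + \<bar>Cb\<bar>)"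
proof -
  have m1: "real m - 1 > 0" using m by simp
  have "(\<Sum>i<m. (y i - x i \<bullet> ols x y m)\<^sup>2) \<le> (\<Sum>i<m. (y i - x i \<bullet> \<alpha>)\<^sup>2)" by (rule ols_min[OF inv])
  also have "\<dots> = (\<Sum>i<m. (e1 i + e2 i)\<^sup>2)" by (simp add: e)
  also have "\<dots> \<le> (\<Sum>i<m. 2 * (e1 i)\<^sup>2 + 2 * (e2 i)\<^sup>2)"
  proof (rule sum_mono)
    fix i
    have "0 \<le> (e1 i - e2 i)\<^sup>2" by simp
    then show "(e1 i + e2 i)\<^sup>2 \<le> 2 * (e1 i)\<^sup>2 + 2 * (e2 i)\<^sup>2" by (simp add: power2_eq_square algebra_simps)
  qed
  also have "\<dots> = 2 * (\<Sum>i<m. (e1 i)\<^sup>2) + 2 * (\<Sum>i<m. (e2 i)\<^sup>2)" by (simp add: sum.distrib sum_distrib_left)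
  also have "\<dots> \<le> 2 * (\<bar>Ca\<bar> + \<bar>Cb\<bar>) * real m"
  proof -
    have "Ca * real m \<le> \<bar>Ca\<bar> * real m" "Cb * real m \<le> \<bar>Cb\<bar> * real m" by (auto intro: mult_right_mono)
    then show ?thesis using s1 s2 by (simp add: algebra_simps)
  qed
  also have "\<dots> \<le> 4 * (\<bar>Ca\<bar> + \<bar>Cb\<bar>) * (real m - 1)"
  proof -
    have "real m \<le> 2 * (real m - 1)" using m by simp
    then have "2 * (\<bar>Ca\<bar> + \<bar>Cb\<bar>) * real m \<le> 2 * (\<bar>Ca\<bar> + \<bar>Cb\<bar>) * (2 * (real m - 1))"
      by (intro mult_left_mono) auto
    moreover have "2 * (\<bar>Ca\<bar> + \<bar>Cb\<bar>) * (2 * (real m - 1)) = 4 * (\<bar>Ca\<bar> + \<bar>Cb\<bar>) * (real m - 1)" by (simp add: algebra_simps)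
    ultimately show ?thesis by linarith
  qed
  finally show ?thesis using m1 by (simp add: sigma2_hat_def divide_le_eq)
qed

lemma gauss_vec_inner:
  assumes "centered_gaussian_vec M V S"
  shows "centered_gaussian_real M (\<lambda>\<omega>. V \<omega> \<bullet> g) (g \<bullet> (S *v g))"
proof -
  have Vm[measurable]: "V \<in> borel_measurable M" and psd: "\<And>u. 0 \<le> u \<bullet> (S *v u)"
    and ch: "\<And>u. (\<integral>\<omega>. cis (u \<bullet> V \<omega>) \<partial>M) = complex_of_real (exp (- (u \<bullet> (S *v u)) / 2))"
    using assms by (auto simp: centered_gaussian_vec_def)
  show ?thesis unfolding centered_gaussian_real_def
  proof (intro conjI allI)
    show "(\<lambda>\<omega>. V \<omega> \<bullet> g) \<in> borel_measurable M" by measurable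
    show "0 \<le> g \<bullet> (S *v g)" by (rule psd)
    fix t :: real
    have "(\<integral>\<omega>. cis (t * (V \<omega> \<bullet> g)) \<partial>M) = (\<integral>\<omega>. cis ((t *\<^sub>R g) \<bullet> V \<omega>) \<partial>M)"
      by (simp add: inner_commute)
    also have "\<dots> = complex_of_real (exp (- ((t *\<^sub>R g) \<bullet> (S *v (t *\<^sub>R g))) / 2))" by (rule ch)
    also have "(t *\<^sub>R g) \<bullet> (S *v (t *\<^sub>R g)) = t\<^sup>2 * (g \<bullet> (S *v g))"
      by (simp add: scaleR_matrix_vector_assoc[symmetric] matrix_scaleR_vector_ac power2_eq_square)
    finally show "(\<integral>\<omega>. cis (t * (V \<omega> \<bullet> g)) \<partial>M) = complex_of_real (exp (- (t\<^sup>2 * (g \<bullet> (S *v g))) / 2))" .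
  qed
qed

theorem proposition4p3:
  fixes M :: "'a measure"
    and B :: "real^'d^'p" and \<gamma> :: "real^'d" and \<alpha> :: "real^'p"
    and SZ :: "real^'d^'d" and SX :: "real^'p^'p" and s2Y :: real
    and Z NZ :: "nat \<Rightarrow> 'a \<Rightarrow> real^'d"
    and NX NXt :: "nat \<Rightarrow> 'a \<Rightarrow> real^'p"
    and NY NYi :: "nat \<Rightarrow> 'a \<Rightarrow> real"
    and XO XI :: "nat \<Rightarrow> 'a \<Rightarrow> real^'p"
    and YO YI :: "nat \<Rightarrow> 'a \<Rightarrow> real"
    and n :: "nat \<Rightarrow> nat" and c \<epsilon> :: real
  assumes "prob_space M"
    \<comment> \<open>noises of the k-th observational sample (Z k, NX k, NY k) and of the k-th
        interventional sample (NZ k, NXt k, NYi k); all samples mutually independent\<close>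
    and "prob_space.indep_vars M (\<lambda>_. borel)
          (\<lambda>j \<omega>. case j of Inl k \<Rightarrow> (Z k \<omega>, NX k \<omega>, NY k \<omega>)
                         | Inr k \<Rightarrow> (NZ k \<omega>, NXt k \<omega>, NYi k \<omega>)) UNIV"
    \<comment> \<open>within each sample the three noises are mutually independent
        (joint law = product of the marginal laws)\<close>
    and "\<And>k. distr M (borel \<Otimes>\<^sub>M borel \<Otimes>\<^sub>M borel) (\<lambda>\<omega>. (Z k \<omega>, NX k \<omega>, NY k \<omega>))
              = distr M borel (Z k) \<Otimes>\<^sub>M (distr M borel (NX k) \<Otimes>\<^sub>M distr M borel (NY k))"
    and "\<And>k. distr M (borel \<Otimes>\<^sub>M borel \<Otimes>\<^sub>M borel) (\<lambda>\<omega>. (NZ k \<omega>, NXt k \<omega>, NYi k \<omega>))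
              = distr M borel (NZ k) \<Otimes>\<^sub>M (distr M borel (NXt k) \<Otimes>\<^sub>M distr M borel (NYi k))"
    \<comment> \<open>distributions of the noises\<close>
    and "\<And>k. centered_gaussian_vec M (Z k) SZ"
    and "\<And>k. centered_gaussian_vec M (NX k) SX"
    and "\<And>k. centered_gaussian_real M (NY k) s2Y"
    and "\<And>k. centered_gaussian_vec M (NZ k) SZ"
    and "\<And>k. centered_gaussian_real M (NYi k) s2Y"
    and "\<And>k. NXt k \<in> borel_measurable M"
    and "\<And>k. distr M borel (NXt k) = distr M borel (NXt 0)"
    \<comment> \<open>structural equations: observational and interventional model\<close>
    and "\<And>k \<omega>. XO k \<omega> = B *v Z k \<omega> + NX k \<omega>"
    and "\<And>k \<omega>. YO k \<omega> = Z k \<omega> \<bullet> \<gamma> + XO k \<omega> \<bullet> \<alpha> + NY k \<omega>"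
    and "\<And>k \<omega>. XI k \<omega> = NXt k \<omega>"
    and "\<And>k \<omega>. YI k \<omega> = NZ k \<omega> \<bullet> \<gamma> + XI k \<omega> \<bullet> \<alpha> + NYi k \<omega>"
    \<comment> \<open>X_O^T X_O and X_I^T X_I are non-singular (almost surely, for all large m)\<close>
    and "AE \<omega> in M. eventually (\<lambda>m. invertible (gram (\<lambda>k. XO k \<omega>) (n m)) \<and>
                                      invertible (gram (\<lambda>k. XI k \<omega>) m)) sequentially"
    and "c > 0"
    and "(\<lambda>m. real (n m) / real m) \<longlonglongrightarrow> c"
    and "\<epsilon> > 0"
  shows "AE \<omega> in M. (\<lambda>m. W_hat \<epsilon> (\<lambda>k. XO k \<omega>) (\<lambda>k. YO k \<omega>) (\<lambda>k. XI k \<omega>) (\<lambda>k. YI k \<omega>) (n m) m)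
                        \<longlonglongrightarrow> mat 1"
proof -
  interpret prob_space M by (rule assms(1))
  have XIeq: "XI = NXt" using assms(14) by (intro ext) auto
  have indX: "indep_vars (\<lambda>_. borel) (\<lambda>k \<omega>. NXt k \<omega>) UNIV"
    using indep_Inr[OF assms(1) assms(2) meas_proj(1)] by simp
  have indA: "indep_vars (\<lambda>_. borel) (\<lambda>k \<omega>. NZ k \<omega> \<bullet> \<gamma>) UNIV"
    using indep_Inr[OF assms(1) assms(2) meas_proj(3)[of \<gamma>]] by simp
  have indB: "indep_vars (\<lambda>_. borel) (\<lambda>k \<omega>. NYi k \<omega>) UNIV"
    using indep_Inr[OF assms(1) assms(2) meas_proj(2)] by simp
  have gA: "centered_gaussian_real M (\<lambda>\<omega>. NZ k \<omega> \<bullet> \<gamma>) (\<gamma> \<bullet> (SZ *v \<gamma>))" for k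
    by (rule gauss_vec_inner[OF assms(8)])
  have AE1: "AE \<omega> in M. \<exists>C. eventually (\<lambda>m. (\<Sum>i<m. (NZ i \<omega> \<bullet> \<gamma>)\<^sup>2) \<le> C * real m) sequentially"
    by (rule slln_sq[OF indA gauss_moments(1)[OF assms(1) gA] gauss_moments(2)[OF assms(1) gA], where \<mu>="3 * (\<gamma> \<bullet> (SZ *v \<gamma>))\<^sup>2"])
       (simp add: gauss_moments(3)[OF assms(1) gA])
  have AE2: "AE \<omega> in M. \<exists>C. eventually (\<lambda>m. (\<Sum>i<m. (NYi i \<omega>)\<^sup>2) \<le> C * real m) sequentially"
    by (rule slln_sq[OF indB gauss_moments(1)[OF assms(1) assms(9)] gauss_moments(2)[OF assms(1) assms(9)], where \<mu>="3 * s2Y\<^sup>2"])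
       (simp add: gauss_moments(3)[OF assms(1) assms(9)])
  have invI: "AE \<omega> in M. eventually (\<lambda>m. invertible (gram (\<lambda>k. NXt k \<omega>) m)) sequentially"
    using assms(16) by (rule eventually_mono) (auto simp: XIeq elim: eventually_mono)
  have AE3: "AE \<omega> in M. \<forall>L>0. eventually (\<lambda>m. \<forall>v. L * (norm v)\<^sup>2 \<le> v \<bullet> (gram (\<lambda>k. NXt k \<omega>) m *v v)) sequentially"
    by (rule quad_lower_AE[OF indX assms(11) invI])
  have "AE \<omega> in M. (eventually (\<lambda>m. invertible (gram (\<lambda>k. XO k \<omega>) (n m)) \<and>
                                      invertible (gram (\<lambda>k. XI k \<omega>) m)) sequentially) \<and>
      (\<exists>C. eventually (\<lambda>m. (\<Sum>i<m. (NZ i \<omega> \<bullet> \<gamma>)\<^sup>2) \<le> C * real m) sequentially) \<and>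
      (\<exists>C. eventually (\<lambda>m. (\<Sum>i<m. (NYi i \<omega>)\<^sup>2) \<le> C * real m) sequentially) \<and>
      (\<forall>L>0. eventually (\<lambda>m. \<forall>v. L * (norm v)\<^sup>2 \<le> v \<bullet> (gram (\<lambda>k. NXt k \<omega>) m *v v)) sequentially)"
    using assms(16) AE1 AE2 AE3 by (intro eventually_conj)
  then show ?thesis
  proof (rule eventually_mono, elim conjE exE)
    fix \<omega> Ca Cb
    assume inv: "eventually (\<lambda>m. invertible (gram (\<lambda>k. XO k \<omega>) (n m)) \<and>
                                      invertible (gram (\<lambda>k. XI k \<omega>) m)) sequentially"
      and ca: "eventually (\<lambda>m. (\<Sum>i<m. (NZ i \<omega> \<bullet> \<gamma>)\<^sup>2) \<le> Ca * real m) sequentially"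
      and cb: "eventually (\<lambda>m. (\<Sum>i<m. (NYi i \<omega>)\<^sup>2) \<le> Cb * real m) sequentially"
      and q: "\<forall>L>0. eventually (\<lambda>m. \<forall>v. L * (norm v)\<^sup>2 \<le> v \<bullet> (gram (\<lambda>k. NXt k \<omega>) m *v v)) sequentially"
    show "(\<lambda>m. W_hat \<epsilon> (\<lambda>k. XO k \<omega>) (\<lambda>k. YO k \<omega>) (\<lambda>k. XI k \<omega>) (\<lambda>k. YI k \<omega>) (n m) m) \<longlonglongrightarrow> mat 1"
    proof (rule W_conv_det[OF assms(19)])
      show "eventually (\<lambda>m. invertible (gram (\<lambda>k. XO k \<omega>) (n m))) sequentially"
        using inv by (rule eventually_mono) simp
      show "eventually (\<lambda>m. sigma2_hat (\<lambda>k. XI k \<omega>) (\<lambda>k. YI k \<omega>) m \<le> 4 * (\<bar>Ca\<bar> + \<bar>Cb\<bar>)) sequentially"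
        using inv ca cb eventually_ge_at_top[of "2::nat"]
      proof eventually_elim
        case (elim m)
        have e: "\<And>i. (\<lambda>k. YI k \<omega>) i - (\<lambda>k. XI k \<omega>) i \<bullet> \<alpha> = NZ i \<omega> \<bullet> \<gamma> + NYi i \<omega>"
          using assms(15) by simp
        have i2: "invertible (gram (\<lambda>k. XI k \<omega>) m)" using elim by simp
        show ?case
          by (rule sigma_bound[OF i2 _ e]) (use elim in auto)
      qed
      fix L :: real assume L: "L > 0"
      show "eventually (\<lambda>m. invertible (gram (\<lambda>k. XI k \<omega>) m) \<and>
                (\<forall>u. L * (norm u)\<^sup>2 \<le> u \<bullet> (gram (\<lambda>k. XI k \<omega>) m *v u))) sequentially"
        using inv q[rule_format, OF L] by eventually_elim (simp add: XIeq)
    qed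
  qed
qed

end
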